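(* Let $m \ge 1$ and $n \ge 2m+2$ be integers. Then for every real $r$ with $|r|<1$, $$\int_{-1}^1 \frac{T_n(s)(1-s^2)^{m-\frac{1}{2}}}{(s-r)^3}\,ds = (-1)^{m+1}\left(\frac{1}{2}\right)^{2m+1}\frac{\pi}{1-r^2}\sum_{j=0}^{2m-1}(-1)^j\binom{2m-1}{j}(n+1-2m+2j)\Big[(n+2-2m+2j)U_{n-1-2m+2j}(r)-(n-2m+2j)U_{n+1-2m+2j}(r)\Big],$$ where the integral is a Hadamard finite-part integral.
   Context: $T_k(s)=\cos(k\cos^{-1}s)$ and $U_k(s)=\frac{\sin((k+1)\cos^{-1}s)}{\sin(\cos^{-1}s)}$ are the Tchebyshev polynomials of the first and second kinds. For a positive integer $\alpha\ge 2$ and $|r|<1$, the integral $\int_{-1}^1 \frac{D(s)}{(s-r)^\alpha}ds$ is understood in the Hadamard finite-part sense; in particular it satisfies $\int_{-1}^1 \frac{D(s)}{(s-r)^{\alpha}}ds=\frac{1}{\alpha-1}\frac{d}{dr}\int_{-1}^1\frac{D(s)}{(s-r)^{\alpha-1}}ds$, where for $\alpha-1=1$ the right-hand integral is a Cauchy principal value. $\binom{a}{j}=\frac{a!}{j!(a-j)!}$. *)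

theory Defs
  imports "HOL-Analysis.Analysis"
begin

definition chebT :: "nat \<Rightarrow> real \<Rightarrow> real" where
  "chebT k s = cos (real k * arccos s)"

definition chebU :: "nat \<Rightarrow> real \<Rightarrow> real" where
  "chebU k s = sin ((real k + 1) * arccos s) / sin (arccos s)"

definition cpv :: "(real \<Rightarrow> real) \<Rightarrow> real \<Rightarrow> real" where
  "cpv D r = Lim (at_right 0)
     (\<lambda>e. integral {-1..r - e} (\<lambda>s. D s / (s - r)) + integral {r + e..1} (\<lambda>s. D s / (s - r)))"

fun hadamard_fp :: "(real \<Rightarrow> real) \<Rightarrow> nat \<Rightarrow> real \<Rightarrow> real" where
  "hadamard_fp D 0 r = integral {-1..1} D"
| "hadamard_fp D (Suc 0) r = cpv D r"
| "hadamard_fp D (Suc (Suc k)) r = (1 / real (Suc k)) * deriv (hadamard_fp D (Suc k)) r"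

end

theory Submission
  imports Defs
begin


definition dl :: "nat \<Rightarrow> (real \<Rightarrow> real) \<Rightarrow> real \<Rightarrow> real" where
  "dl M h v = (\<Sum>j\<le>M. (-1)^j * real (M choose j) * h (v - real M + 2 * real j))"

lemma dl_Suc: "dl (Suc M) h v = dl M h (v - 1) - dl M h (v + 1)"
proof -
  have e1: "dl M h (v - 1) = (\<Sum>j\<le>Suc M. (-1)^j * real (M choose j) * h (v - 1 - real M + 2 * real j))"
    unfolding dl_def by (simp add: algebra_simps)
  also have "\<dots> = h (v - 1 - real M) + (\<Sum>i\<le>M. (-1)^(Suc i) * real (M choose Suc i) * h (v + 1 - real M + 2 * real i))"
    by (subst sum.atMost_Suc_shift) (simp add: algebra_simps)
  finally have A: "dl M h (v - 1) = h (v - 1 - real M) + (\<Sum>i\<le>M. (-1)^(Suc i) * real (M choose Suc i) * h (v + 1 - real M + 2 * real i))" .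
  have "dl (Suc M) h v = h (v - 1 - real M) + (\<Sum>i\<le>M. (-1)^(Suc i) * (real (M choose i) + real (M choose Suc i)) * h (v + 1 - real M + 2 * real i))"
    unfolding dl_def by (subst sum.atMost_Suc_shift) (simp add: algebra_simps)
  also have "\<dots> = h (v - 1 - real M) + ((\<Sum>i\<le>M. (-1)^(Suc i) * real (M choose Suc i) * h (v + 1 - real M + 2 * real i))
       - (\<Sum>i\<le>M. (-1)^i * real (M choose i) * h (v + 1 - real M + 2 * real i)))"
    unfolding sum_subtractf[symmetric] by (intro arg_cong2[where f="(+)"] refl sum.cong) (simp_all add: algebra_simps)
  also have "\<dots> = dl M h (v - 1) - dl M h (v + 1)"
    using A unfolding dl_def by (simp add: algebra_simps)
  finally show ?thesis .
qed

lemma dl_lin: "c * dl M h v = dl M (\<lambda>b. c * h b) v"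
  unfolding dl_def by (simp add: sum_distrib_left algebra_simps)

lemma dl_diff: "dl M h v - dl M g v = dl M (\<lambda>b. h b - g b) v"
  unfolding dl_def by (simp add: sum_subtractf[symmetric] algebra_simps)

lemma dl_cong: "(\<And>b. h b = g b) \<Longrightarrow> dl M h v = dl M g v"
  by metis

lemma sin_pow_cos:
  "sin t ^ M * cos (v * t - p) = (-1)^M / 2^M * dl M (\<lambda>b. cos (b * t - p - real M * pi / 2)) v"
proof (induction M arbitrary: v)
  case 0
  then show ?case by (simp add: dl_def)
next
  case (Suc M)
  define H where "H = (\<lambda>b. cos (b * t - p - real (Suc M) * pi / 2))"
  have key: "sin t * cos (b * t - p - real M * pi / 2) = (H (b + 1) - H (b - 1)) / 2" for b
  proof -
    define u where "u = b * t - p - real M * pi / 2"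
    have "H (b + 1) = cos ((u + t) - pi/2)"
      unfolding H_def u_def by (rule arg_cong[where f=cos]) (simp add: algebra_simps)
    also have "\<dots> = sin (u + t)" by (simp add: cos_diff)
    finally have 1: "H (b + 1) = sin (u + t)" .
    have "H (b - 1) = cos ((u - t) - pi/2)"
      unfolding H_def u_def by (rule arg_cong[where f=cos]) (simp add: algebra_simps)
    also have "\<dots> = sin (u - t)" by (simp add: cos_diff)
    finally have 2: "H (b - 1) = sin (u - t)" .
    show ?thesis unfolding 1 2 u_def by (simp add: sin_add sin_diff)
  qed
  have "sin t ^ Suc M * cos (v * t - p) = (-1)^M / 2^M * (sin t * dl M (\<lambda>b. cos (b * t - p - real M * pi / 2)) v)"
    by (subst power_Suc, subst mult.assoc, subst Suc.IH) simp
  also have "sin t * dl M (\<lambda>b. cos (b * t - p - real M * pi / 2)) v = dl M (\<lambda>b. (H (b + 1) - H (b - 1)) / 2) v"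
    by (simp add: dl_lin key)
  also have "\<dots> = (dl M H (v + 1) - dl M H (v - 1)) / 2"
    unfolding dl_def by (simp add: sum_divide_distrib sum_subtractf[symmetric] algebra_simps)
  also have "\<dots> = - dl (Suc M) H v / 2"
    by (simp add: dl_Suc)
  finally show ?case unfolding H_def by simp
qed

lemma powr_sqrt_pow:
  assumes "0 \<le> y" "m \<ge> 1"
  shows "y powr (real m - 1/2) = sqrt y ^ (2*m-1)"
proof (cases "y = 0")
  case True then show ?thesis using assms by simp
next
  case False
  then have yp: "y > 0" using assms by simp
  have "sqrt y ^ (2*m-1) = (y powr (1/2)) ^ (2*m-1)" using yp by (simp add: powr_half_sqrt)
  also have "\<dots> = y powr (real (2*m-1) * (1/2))" using yp by (simp add: powr_power)
  also have "real (2*m-1) * (1/2) = real m - 1/2" using assms by (simp add: of_nat_diff)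
  finally show ?thesis by simp
qed

lemma cos_shift_odd:
  assumes "m \<ge> 1"
  shows "cos (x - real (2*m-1) * pi / 2) = - ((-1)^m * sin x)"
proof -
  have eq: "x - real (2*m-1) * pi / 2 = (x - real m * pi) + pi/2" using assms by (simp add: of_nat_diff field_simps)
  have "cos (x - real (2*m-1) * pi / 2) = cos ((x - real m * pi) + pi/2)" by (subst eq) (rule refl)
  also have "\<dots> = - sin (x - real m * pi)" by (simp add: cos_add)
  also have "\<dots> = - ((-1)^m * sin x)" by (simp add: sin_diff)
  finally show ?thesis .
qed

lemma D_expand:
  assumes "m \<ge> 1" "-1 \<le> s" "s \<le> 1"
  shows "chebT n s * (1 - s\<^sup>2) powr (real m - 1/2) =
    (-1)^m / 2^(2*m-1) * (\<Sum>j=0..2*m-1. (-1)^j * real ((2*m-1) choose j) *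
       sin ((real n - real (2*m-1) + 2 * real j) * arccos s))"
proof -
  define M where "M = 2*m-1"
  define t where "t = arccos s"
  have st: "sin t = sqrt (1 - s\<^sup>2)" unfolding t_def using assms by (simp add: sin_arccos)
  have "(1 - s\<^sup>2) powr (real m - 1/2) = sin t ^ M"
    unfolding st M_def using assms by (intro powr_sqrt_pow) (auto simp: abs_square_le_1)
  then have "chebT n s * (1 - s\<^sup>2) powr (real m - 1/2) = sin t ^ M * cos (real n * t - 0)"
    unfolding chebT_def t_def by simp
  also have "\<dots> = (-1)^M / 2^M * dl M (\<lambda>b. cos (b * t - 0 - real M * pi / 2)) (real n)"
    by (rule sin_pow_cos)
  also have "(-1::real)^M = -1"
  proof -
    have "M = Suc (2*(m-1))" unfolding M_def using assms by simp
    then show ?thesis by simp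
  qed
  also have "dl M (\<lambda>b. cos (b * t - 0 - real M * pi / 2)) (real n)
     = dl M (\<lambda>b. - ((-1)^m * sin (b * t))) (real n)"
    unfolding M_def using cos_shift_odd[OF assms(1)] by simp
  also have "\<dots> = - ((-1)^m * (\<Sum>j=0..M. (-1)^j * real (M choose j) * sin ((real n - real M + 2 * real j) * t)))"
    unfolding dl_def atLeast0AtMost by (simp add: sum_distrib_left sum_negf algebra_simps)
  finally show ?thesis unfolding M_def t_def by simp
qed



definition PV :: "(real \<Rightarrow> real) \<Rightarrow> real \<Rightarrow> real \<Rightarrow> real" where
  "PV D x e = integral {-1..x-e} (\<lambda>s. D s / (s - x)) + integral {x+e..1} (\<lambda>s. D s / (s - x))"

lemma N_pos:
  fixes x s :: real
  assumes "\<bar>x\<bar> < 1" "-1 \<le> s" "s \<le> 1"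
  shows "1 - x * s + sqrt (1 - x\<^sup>2) * sqrt (1 - s\<^sup>2) > 0"
proof -
  have "\<bar>x * s\<bar> < 1"
    using assms by (simp add: abs_mult) (metis abs_le_iff abs_ge_zero less_le_trans mult_le_one mult_left_le less_eq_real_def minus_le_iff)
  moreover have "sqrt (1 - x\<^sup>2) * sqrt (1 - s\<^sup>2) \<ge> 0"
    using assms by (intro mult_nonneg_nonneg real_sqrt_ge_zero) (auto simp: abs_square_le_1)
  ultimately show ?thesis by linarith
qed

lemma Phi1_deriv:
  fixes x s :: real
  assumes x: "\<bar>x\<bar> < 1" and s: "-1 < s" "s < 1" "s \<noteq> x"
  defines "w \<equiv> sqrt (1 - x\<^sup>2)"
  shows "((\<lambda>s. sqrt (1 - s\<^sup>2) - x * arcsin s - w * ln (1 - x * s + w * sqrt (1 - s\<^sup>2)))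
          has_real_derivative (sin (arccos s) / (s - x) - w / (s - x))) (at s)"
proof -
  define t where "t = sqrt (1 - s\<^sup>2)"
  define N where "N = 1 - x * s + w * t"
  have s2: "s\<^sup>2 < 1" using s by (simp add: abs_square_less_1)
  have x2: "x\<^sup>2 < 1" using x by (simp add: abs_square_less_1)
  have tpos: "t > 0" unfolding t_def using s2 by simp
  have tt: "t * t = 1 - s\<^sup>2" unfolding t_def using s2 by simp
  have ww: "w * w = 1 - x\<^sup>2" unfolding w_def using x2 by simp
  have Npos: "N > 0" unfolding N_def t_def w_def using N_pos[of x s] x s by simp
  have st: "sin (arccos s) = t" unfolding t_def using s by (simp add: sin_arccos)
  have d1: "((\<lambda>s. sqrt (1 - s\<^sup>2)) has_real_derivative (- s / t)) (at s)"
  proof -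
    have "((\<lambda>s. sqrt (1 - s\<^sup>2)) has_real_derivative (inverse (sqrt (1 - s\<^sup>2)) / 2 * (- (2 * s)))) (at s)"
      using s2 by (intro DERIV_chain2[OF DERIV_real_sqrt]) (auto intro!: derivative_eq_intros)
    then show ?thesis unfolding t_def by (simp add: field_simps)
  qed
  have d2: "(arcsin has_real_derivative (1 / t)) (at s)"
    using DERIV_arcsin[OF s(1,2)] unfolding t_def by (simp add: divide_inverse)
  have d3: "((\<lambda>s. 1 - x * s + w * sqrt (1 - s\<^sup>2)) has_real_derivative (- x + w * (- s / t))) (at s)"
  proof -
    have a: "((\<lambda>z. 1 - x * z) has_real_derivative - x) (at s)" by (auto intro!: derivative_eq_intros)
    show ?thesis using DERIV_add[OF a DERIV_cmult[OF d1, of w]] by simp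
  qed
  have d4: "((\<lambda>s. ln (1 - x * s + w * sqrt (1 - s\<^sup>2))) has_real_derivative ((1 / N) * (- x + w * (- s / t)))) (at s)"
    using DERIV_chain2[OF DERIV_ln_divide d3] Npos unfolding N_def t_def by simp
  have d: "((\<lambda>s. sqrt (1 - s\<^sup>2) - x * arcsin s - w * ln (1 - x * s + w * sqrt (1 - s\<^sup>2)))
          has_real_derivative (- s / t - x * (1 / t) - w * ((1 / N) * (- x + w * (- s / t))))) (at s)"
    by (intro DERIV_diff d1 DERIV_cmult d2 d4)
  have P0: "(x * t + w * s) * (s - x) + t * N - w * N = t * ((1 - x\<^sup>2) - w * w) + w * (t * t - (1 - s\<^sup>2))"
    unfolding N_def by (simp add: algebra_simps power2_eq_square)
  have P: "(x * t + w * s) * (s - x) = N * (w - t)"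
    using P0 tt ww by (simp add: algebra_simps)
  have sx: "s - x \<noteq> 0" using s by simp
  have "- s / t - x * (1 / t) - w * ((1 / N) * (- x + w * (- s / t)))
        = - (s + x) / t + w * ((x * t + w * s) / (t * N))"
    using tpos Npos by (simp add: field_simps)
  also have "(x * t + w * s) = N * (w - t) / (s - x)" using P sx by (simp add: field_simps)
  also have "- (s + x) / t + w * (N * (w - t) / (s - x) / (t * N)) = (- (s + x) * (s - x) + w * (w - t)) / (t * (s - x))"
    using tpos Npos sx by (simp add: field_simps)
  also have "- (s + x) * (s - x) + w * (w - t) = t * (t - w)"
    using tt ww by (simp add: algebra_simps power2_eq_square)
  also have "t * (t - w) / (t * (s - x)) = t / (s - x) - w / (s - x)"
    using tpos by (simp add: diff_divide_distrib)
  finally show ?thesis using d st by simp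
qed

lemma eventually_small:
  fixes b :: real
  assumes "b > 0" "\<And>e. 0 < e \<Longrightarrow> e < b \<Longrightarrow> P e"
  shows "eventually P (at_right 0)"
  unfolding eventually_at_right_field using assms by blast

lemma PV1:
  fixes x :: real
  assumes x: "\<bar>x\<bar> < 1"
  shows "(PV (\<lambda>s. sin (arccos s)) x \<longlongrightarrow> - pi * x) (at_right 0)"
proof -
  define w where "w = sqrt (1 - x\<^sup>2)"
  define Phi1 where "Phi1 = (\<lambda>s. sqrt (1 - s\<^sup>2) - x * arcsin s - w * ln (1 - x * s + w * sqrt (1 - s\<^sup>2)))"
  have Npos: "1 - x * s + w * sqrt (1 - s\<^sup>2) > 0" if "-1 \<le> s" "s \<le> 1" for s
    unfolding w_def using N_pos[of x s] x that by simp
  have cont: "continuous_on {-1..1} Phi1"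
    unfolding Phi1_def
    by (intro continuous_intros) (use Npos in \<open>auto simp: less_imp_neq[symmetric]\<close>)
  have der: "(Phi1 has_real_derivative (sin (arccos s) / (s - x) - w / (s - x))) (at s)"
    if "-1 < s" "s < 1" "s \<noteq> x" for s
    unfolding Phi1_def w_def using Phi1_deriv[OF x that] by simp
  have Phi1_m1: "Phi1 (-1) = x * pi / 2 - w * ln (1 + x)" unfolding Phi1_def by simp
  have Phi1_1: "Phi1 1 = - x * pi / 2 - w * ln (1 - x)" unfolding Phi1_def by simp
  have eq: "PV (\<lambda>s. sin (arccos s)) x e = Phi1 (x - e) - Phi1 (x + e) - pi * x"
    if e: "0 < e" "e < 1 - \<bar>x\<bar>" for e
  proof -
    define PhiL where "PhiL = (\<lambda>s. Phi1 s + w * ln (x - s))"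
    define PhiR where "PhiR = (\<lambda>s. Phi1 s + w * ln (s - x))"
    have L: "((\<lambda>s. sin (arccos s) / (s - x)) has_integral (PhiL (x - e) - PhiL (-1))) {-1..x-e}"
    proof (rule fundamental_theorem_of_calculus_interior)
      show "-1 \<le> x - e" using e x by linarith
      show "continuous_on {-1..x-e} PhiL"
        unfolding PhiL_def
        by (intro continuous_intros continuous_on_subset[OF cont]) (use e in auto)
      fix s assume s: "s \<in> {-1<..<x-e}"
      have "(PhiL has_real_derivative ((sin (arccos s) / (s - x) - w / (s - x)) + w * (1 / (x - s) * (0 - 1)))) (at s)"
        unfolding PhiL_def using s e x
        by (intro DERIV_add der DERIV_cmult DERIV_chain2[OF DERIV_ln_divide] DERIV_diff DERIV_const DERIV_ident) auto
      moreover have "(sin (arccos s) / (s - x) - w / (s - x)) + w * (1 / (x - s) * (0 - 1)) = sin (arccos s) / (s - x)"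
      proof -
        have "1 / (x - s) * (0 - 1) = 1 / (s - x)"
          using s e by (simp add: field_simps)
        then show ?thesis by simp
      qed
      ultimately show "(PhiL has_vector_derivative sin (arccos s) / (s - x)) (at s)"
        unfolding has_real_derivative_iff_has_vector_derivative[symmetric] by metis
    qed
    have R: "((\<lambda>s. sin (arccos s) / (s - x)) has_integral (PhiR 1 - PhiR (x + e))) {x+e..1}"
    proof (rule fundamental_theorem_of_calculus_interior)
      show "x + e \<le> 1" using e x by linarith
      show "continuous_on {x+e..1} PhiR"
        unfolding PhiR_def
        by (intro continuous_intros continuous_on_subset[OF cont]) (use e x in auto)
      fix s assume s: "s \<in> {x+e<..<1}"
      have "(PhiR has_real_derivative ((sin (arccos s) / (s - x) - w / (s - x)) + w * (1 / (s - x) * (1 - 0)))) (at s)"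
        unfolding PhiR_def using s e x
        by (intro DERIV_add der DERIV_cmult DERIV_chain2[OF DERIV_ln_divide] DERIV_diff DERIV_const DERIV_ident) auto
      moreover have "(sin (arccos s) / (s - x) - w / (s - x)) + w * (1 / (s - x) * (1 - 0)) = sin (arccos s) / (s - x)"
        by simp
      ultimately show "(PhiR has_vector_derivative sin (arccos s) / (s - x)) (at s)"
        unfolding has_real_derivative_iff_has_vector_derivative[symmetric] by metis
    qed
    have "PV (\<lambda>s. sin (arccos s)) x e = (PhiL (x - e) - PhiL (-1)) + (PhiR 1 - PhiR (x + e))"
      unfolding PV_def using integral_unique[OF L] integral_unique[OF R] by simp
    also have "\<dots> = Phi1 (x - e) - Phi1 (x + e) - pi * x"
      unfolding PhiL_def PhiR_def Phi1_m1 Phi1_1 by (simp add: algebra_simps)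
    finally show ?thesis .
  qed
  have ic: "isCont Phi1 x"
    using continuous_on_interior[OF cont] x by (auto simp: abs_less_iff)
  have "((\<lambda>e. Phi1 (x - e) - Phi1 (x + e) - pi * x) \<longlongrightarrow> Phi1 x - Phi1 x - pi * x) (at_right 0)"
  proof (intro tendsto_intros)
    have a: "((\<lambda>e. x - e) \<longlongrightarrow> x) (at_right (0::real))"
      by (auto intro!: tendsto_eq_intros)
    have b: "((\<lambda>e. x + e) \<longlongrightarrow> x) (at_right (0::real))"
      by (auto intro!: tendsto_eq_intros)
    show "((\<lambda>e. Phi1 (x - e)) \<longlongrightarrow> Phi1 x) (at_right 0)" by (rule isCont_tendsto_compose[OF ic a])
    show "((\<lambda>e. Phi1 (x + e)) \<longlongrightarrow> Phi1 x) (at_right 0)" by (rule isCont_tendsto_compose[OF ic b])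
  qed
  then have "((\<lambda>e. Phi1 (x - e) - Phi1 (x + e) - pi * x) \<longlongrightarrow> - pi * x) (at_right 0)" by simp
  moreover have "eventually (\<lambda>e. Phi1 (x - e) - Phi1 (x + e) - pi * x = PV (\<lambda>s. sin (arccos s)) x e) (at_right 0)"
    by (rule eventually_small[of "1 - \<bar>x\<bar>"]) (use x eq in auto)
  ultimately show ?thesis by (rule Lim_transform_eventually)
qed



lemma int_lin:
  fixes f g h k :: "real \<Rightarrow> real"
  assumes "f integrable_on I" "g integrable_on I" "h integrable_on I" "k integrable_on I"
    "\<And>s. s \<in> I \<Longrightarrow> f s + g s = a * h s + b * k s"
  shows "integral I f + integral I g = a * integral I h + b * integral I k"
proof -
  have "integral I f + integral I g = integral I (\<lambda>s. f s + g s)"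
    using assms by (simp add: integral_add)
  also have "\<dots> = integral I (\<lambda>s. a * h s + b * k s)"
    using assms by (intro integral_cong) auto
  also have "\<dots> = a * integral I h + b * integral I k"
  proof -
    have "integral I (\<lambda>s. a * h s + b * k s) = integral I (\<lambda>s. a * h s) + integral I (\<lambda>s. b * k s)"
      by (rule integral_add) (intro integrable_on_mult_right assms)+
    also have "integral I (\<lambda>s. a * h s) = a * integral I h" by simp
    also have "integral I (\<lambda>s. b * k s) = b * integral I k" by simp
    finally show ?thesis .
  qed
  finally show ?thesis .
qed

lemma cont_sin_arccos:
  assumes "-1 \<le> a" "b \<le> 1"
  shows "continuous_on {a..b} (\<lambda>s. sin (c * arccos s))"
proof -
  have "continuous_on {a..b} arccos"
    by (rule continuous_on_subset[OF continuous_on_arccos']) (use assms in auto)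
  then have "continuous_on {a..b} (\<lambda>s. c * arccos s)" by (rule continuous_on_mult_left)
  then show ?thesis by (rule continuous_on_sin)
qed

lemma cont_sin_arccos_div:
  assumes "-1 \<le> a" "b \<le> 1" "x \<notin> {a..b}"
  shows "continuous_on {a..b} (\<lambda>s. sin (c * arccos s) / (s - x))"
proof (rule continuous_on_divide)
  show "continuous_on {a..b} (\<lambda>s. sin (c * arccos s))" by (rule cont_sin_arccos[OF assms(1,2)])
  show "continuous_on {a..b} (\<lambda>s. s - x)" by (intro continuous_intros)
  show "\<forall>s\<in>{a..b}. s - x \<noteq> 0" using assms(3) by auto
qed

lemma int_helper:
  assumes G: "\<And>t. (G has_real_derivative (- sin (c * t) * sin t)) (at t)"
  shows "((\<lambda>s. sin (c * arccos s)) has_integral (G 0 - G pi)) {-1..1}"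
proof -
  have "((\<lambda>s. sin (c * arccos s)) has_integral (G (arccos 1) - G (arccos (-1)))) {-1..1}"
  proof (rule fundamental_theorem_of_calculus_interior)
    have cG: "continuous_on UNIV G"
      using G by (meson DERIV_isCont continuous_at_imp_continuous_on)
    show "continuous_on {-1..1} (\<lambda>s. G (arccos s))"
      by (rule continuous_on_compose2[OF cG continuous_on_arccos']) auto
    fix s :: real assume s: "s \<in> {-1<..<1}"
    have d: "((\<lambda>s. G (arccos s)) has_real_derivative (- sin (c * arccos s) * sin (arccos s)) * inverse (- sqrt (1 - s\<^sup>2))) (at s)"
      using s by (intro DERIV_chain2[OF G DERIV_arccos]) auto
    have "sin (arccos s) = sqrt (1 - s\<^sup>2)" using s by (simp add: sin_arccos)
    moreover have "sin (arccos s) \<noteq> 0" using s by (intro sin_arccos_nonzero) auto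
    ultimately have "(- sin (c * arccos s) * sin (arccos s)) * inverse (- sqrt (1 - s\<^sup>2)) = sin (c * arccos s)"
      by (simp add: field_simps)
    then show "((\<lambda>s. G (arccos s)) has_vector_derivative sin (c * arccos s)) (at s)"
      using d unfolding has_real_derivative_iff_has_vector_derivative[symmetric] by metis
  qed simp
  then show ?thesis by simp
qed

lemma int_sin1: "((\<lambda>s. sin (1 * arccos s)) has_integral (pi / 2)) {-1..1}"
proof -
  define G where "G = (\<lambda>t::real. (sin (2 * t) / 2 - t) / 2)"
  have "(G has_real_derivative (- sin (1 * t) * sin t)) (at t)" for t
  proof -
    have "(G has_real_derivative ((cos (2 * t) * (2 * 1) / 2 - 1) / 2)) (at t)"
      unfolding G_def by (auto intro!: derivative_eq_intros)
    moreover have "(cos (2 * t) * (2 * 1) / 2 - 1) / 2 = - sin (1 * t) * sin t"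
      using cos_double_sin[of t] by (simp add: power2_eq_square field_simps)
    ultimately show ?thesis by metis
  qed
  from int_helper[OF this] show ?thesis unfolding G_def by simp
qed

lemma int_sin_ge2:
  assumes "k \<ge> 2"
  shows "((\<lambda>s. sin (real k * arccos s)) has_integral 0) {-1..1}"
proof -
  define G where "G = (\<lambda>t::real. (sin ((real k + 1) * t) / (real k + 1) - sin ((real k - 1) * t) / (real k - 1)) / 2)"
  have k1: "real k - 1 \<noteq> 0" "real k + 1 \<noteq> 0" using assms by auto
  have "(G has_real_derivative (- sin (real k * t) * sin t)) (at t)" for t
  proof -
    have "(G has_real_derivative ((cos ((real k + 1) * t) * ((real k + 1) * 1) / (real k + 1)
        - cos ((real k - 1) * t) * ((real k - 1) * 1) / (real k - 1)) / 2)) (at t)"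
      unfolding G_def using k1 by (auto intro!: derivative_eq_intros)
    moreover have "(cos ((real k + 1) * t) * ((real k + 1) * 1) / (real k + 1)
        - cos ((real k - 1) * t) * ((real k - 1) * 1) / (real k - 1)) / 2 = - sin (real k * t) * sin t"
    proof -
      have e1: "cos ((real k + 1) * t) * ((real k + 1) * 1) / (real k + 1) = cos (real k * t + t)"
        using k1 by (simp add: distrib_right)
      have e2: "cos ((real k - 1) * t) * ((real k - 1) * 1) / (real k - 1) = cos (real k * t - t)"
        using k1 by (simp add: left_diff_distrib)
      show ?thesis unfolding e1 e2 by (simp add: cos_add cos_diff)
    qed
    ultimately show ?thesis by metis
  qed
  from int_helper[OF this] have I: "((\<lambda>s. sin (real k * arccos s)) has_integral (G 0 - G pi)) {-1..1}" .
  have a: "sin ((real k + 1) * pi) = 0" by (metis of_nat_Suc sin_npi add.commute)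
  have b: "sin ((real k - 1) * pi) = 0" using sin_npi[of "k-1"] assms by (simp add: of_nat_diff)
  have Gpi: "G pi = 0" unfolding G_def a b by simp
  have G0: "G 0 = 0" unfolding G_def by simp
  show ?thesis using I unfolding Gpi G0 by simp
qed

lemma tail_lim:
  fixes g :: "real \<Rightarrow> real" and x :: real
  assumes g: "continuous_on {-1..1} g" and x: "\<bar>x\<bar> < 1"
  shows "((\<lambda>e. integral {-1..x-e} g + integral {x+e..1} g) \<longlongrightarrow> integral {-1..1} g) (at_right 0)"
proof -
  have gi: "g integrable_on {-1..1}" by (rule integrable_continuous_interval[OF g])
  have xi: "x \<in> interior {-1..1::real}" using x by (auto simp: abs_less_iff)
  have c1': "continuous_on {-1..1} (\<lambda>y. integral {-1..y} g)"
    by (rule indefinite_integral_continuous_1[OF gi])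
  have c1: "isCont (\<lambda>y. integral {-1..y} g) x"
    by (rule continuous_on_interior[OF c1' xi])
  have c2': "continuous_on {-1..1} (\<lambda>y. integral {y..1} g)"
    by (rule indefinite_integral_continuous_1'[OF gi])
  have c2: "isCont (\<lambda>y. integral {y..1} g) x"
    by (rule continuous_on_interior[OF c2' xi])
  have a: "((\<lambda>e. x - e) \<longlongrightarrow> x) (at_right (0::real))"
    by (auto intro!: tendsto_eq_intros)
  have b: "((\<lambda>e. x + e) \<longlongrightarrow> x) (at_right (0::real))"
    by (auto intro!: tendsto_eq_intros)
  have eq: "integral {-1..x} g + integral {x..1} g = integral {-1..1} g"
    by (rule Henstock_Kurzweil_Integration.integral_combine) (use x gi in \<open>auto simp: abs_less_iff\<close>)
  have "((\<lambda>e. integral {-1..x-e} g + integral {x+e..1} g) \<longlongrightarrow> integral {-1..x} g + integral {x..1} g) (at_right 0)"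
    by (intro tendsto_add isCont_tendsto_compose[OF c1 a] isCont_tendsto_compose[OF c2 b])
  then show ?thesis unfolding eq .
qed


definition Qi :: "nat \<Rightarrow> real \<Rightarrow> real \<Rightarrow> real" where
  "Qi k x e = integral {-1..x-e} (\<lambda>s. sin (real k * arccos s)) + integral {x+e..1} (\<lambda>s. sin (real k * arccos s))"

abbreviation Pk :: "nat \<Rightarrow> real \<Rightarrow> real \<Rightarrow> real" where
  "Pk k x \<equiv> PV (\<lambda>s. sin (real k * arccos s)) x"

lemma alg1:
  fixes u v w s x :: real
  assumes "u + v = 2 * s * w" "s - x \<noteq> 0"
  shows "u / (s - x) + v / (s - x) = 2 * x * (w / (s - x)) + 2 * w"
proof -
  have "u / (s - x) + v / (s - x) = (u + v) / (s - x)" by (simp add: add_divide_distrib)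
  also have "\<dots> = (2 * x * w + 2 * w * (s - x)) / (s - x)" unfolding assms(1) by (simp add: algebra_simps)
  also have "\<dots> = 2 * x * (w / (s - x)) + 2 * w" using assms(2) by (simp add: add_divide_distrib)
  finally show ?thesis .
qed

lemma pointwise_rec:
  fixes s x :: real
  assumes "-1 \<le> s" "s \<le> 1" "s \<noteq> x"
  shows "sin (real (k+2) * arccos s) / (s - x) + sin (real k * arccos s) / (s - x)
       = 2 * x * (sin (real (k+1) * arccos s) / (s - x)) + 2 * sin (real (k+1) * arccos s)"
proof -
  define A where "A = arccos s"
  have cA: "cos A = s" unfolding A_def using assms by simp
  have 1: "sin (real (k+2) * A) = sin (real (k+1) * A + A)"
    by (rule arg_cong[where f=sin]) (simp add: algebra_simps)
  have 2: "sin (real k * A) = sin (real (k+1) * A - A)"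
    by (rule arg_cong[where f=sin]) (simp add: algebra_simps)
  have "sin (real (k+2) * A) + sin (real k * A) = 2 * s * sin (real (k+1) * A)"
    unfolding 1 2 sin_add sin_diff cA by simp
  moreover have "s - x \<noteq> 0" using assms by simp
  ultimately have "sin (real (k+2) * A) / (s - x) + sin (real k * A) / (s - x)
       = 2 * x * (sin (real (k+1) * A) / (s - x)) + 2 * sin (real (k+1) * A)"
    by (rule alg1)
  then show ?thesis unfolding A_def .
qed

lemma PV_rec:
  fixes x e :: real
  assumes x: "\<bar>x\<bar> < 1" and e: "0 < e" "e < 1 - \<bar>x\<bar>"
  shows "Pk (k+2) x e + Pk k x e = 2 * x * Pk (k+1) x e + 2 * Qi (k+1) x e"
proof -
  have l: "-1 \<le> x - e" "x - e \<le> 1" "x \<notin> {-1..x-e}" using x e by auto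
  have r: "-1 \<le> x + e" "x + e \<le> 1" "x \<notin> {x+e..1}" using x e by auto
  have L: "integral {-1..x-e} (\<lambda>s. sin (real (k+2) * arccos s) / (s - x)) + integral {-1..x-e} (\<lambda>s. sin (real k * arccos s) / (s - x))
    = 2 * x * integral {-1..x-e} (\<lambda>s. sin (real (k+1) * arccos s) / (s - x)) + 2 * integral {-1..x-e} (\<lambda>s. sin (real (k+1) * arccos s))"
    by (intro int_lin integrable_continuous_interval cont_sin_arccos_div cont_sin_arccos pointwise_rec l)
       (use l in auto)
  have R: "integral {x+e..1} (\<lambda>s. sin (real (k+2) * arccos s) / (s - x)) + integral {x+e..1} (\<lambda>s. sin (real k * arccos s) / (s - x))
    = 2 * x * integral {x+e..1} (\<lambda>s. sin (real (k+1) * arccos s) / (s - x)) + 2 * integral {x+e..1} (\<lambda>s. sin (real (k+1) * arccos s))"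
    by (intro int_lin integrable_continuous_interval cont_sin_arccos_div cont_sin_arccos pointwise_rec r)
       (use r in auto)
  show ?thesis using L R unfolding PV_def Qi_def by (simp add: algebra_simps)
qed

lemma Qi_lim:
  fixes x :: real
  assumes x: "\<bar>x\<bar> < 1"
  shows "(Qi k x \<longlongrightarrow> integral {-1..1} (\<lambda>s. sin (real k * arccos s))) (at_right 0)"
  unfolding Qi_def by (rule tail_lim[OF cont_sin_arccos x]) auto

lemma Qi_lim1:
  fixes x :: real
  assumes x: "\<bar>x\<bar> < 1"
  shows "(Qi 1 x \<longlongrightarrow> pi / 2) (at_right 0)"
proof -
  have eq: "integral {-1..1} (\<lambda>s. sin (real 1 * arccos s)) = pi / 2"
    using integral_unique[OF int_sin1] by simp
  show ?thesis using Qi_lim[OF x, of 1] unfolding eq .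
qed

lemma Qi_lim2:
  fixes x :: real
  assumes x: "\<bar>x\<bar> < 1" and k: "k \<ge> 2"
  shows "(Qi k x \<longlongrightarrow> 0) (at_right 0)"
proof -
  have eq: "integral {-1..1} (\<lambda>s. sin (real k * arccos s)) = 0"
    using integral_unique[OF int_sin_ge2[OF k]] .
  show ?thesis using Qi_lim[OF x, of k] unfolding eq .
qed

lemma chebT_rec:
  assumes "-1 \<le> x" "x \<le> 1"
  shows "chebT (k+2) x = 2 * x * chebT (k+1) x - chebT k x"
proof -
  define A where "A = arccos x"
  have cA: "cos A = x" unfolding A_def using assms by simp
  have 1: "cos (real (k+2) * A) = cos (real (k+1) * A + A)"
    by (rule arg_cong[where f=cos]) (simp add: algebra_simps)
  have 2: "cos (real k * A) = cos (real (k+1) * A - A)"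
    by (rule arg_cong[where f=cos]) (simp add: algebra_simps)
  show ?thesis unfolding chebT_def A_def[symmetric] 1 2 cos_add cos_diff cA by simp
qed

lemma PVk_lim:
  fixes x :: real
  assumes x: "\<bar>x\<bar> < 1" and k: "k \<ge> 1"
  shows "(Pk k x \<longlongrightarrow> - pi * chebT k x) (at_right 0)"
proof -
  have xb: "-1 \<le> x" "x \<le> 1" using x by auto
  have ev: "eventually (\<lambda>e. 2 * x * Pk (j+1) x e + 2 * Qi (j+1) x e - Pk j x e = Pk (j+2) x e) (at_right 0)" for j
    by (rule eventually_small[of "1 - \<bar>x\<bar>"]) (use x PV_rec in \<open>auto simp: algebra_simps\<close>)
  have P0: "Pk 0 x e = 0" for e unfolding PV_def by simp
  have P1: "(Pk 1 x \<longlongrightarrow> - pi * chebT 1 x) (at_right 0)"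
    using PV1[OF x] xb unfolding chebT_def by simp
  have "(Pk (j+1) x \<longlongrightarrow> - pi * chebT (j+1) x) (at_right 0) \<and> (Pk (j+2) x \<longlongrightarrow> - pi * chebT (j+2) x) (at_right 0)" for j
  proof (induction j)
    case 0
    have "((\<lambda>e. 2 * x * Pk (0+1) x e + 2 * Qi (0+1) x e - Pk 0 x e) \<longlongrightarrow> 2 * x * (- pi * chebT 1 x) + 2 * (pi / 2) - 0) (at_right 0)"
      using P1 Qi_lim1[OF x] unfolding P0 by (intro tendsto_intros) auto
    then have "(Pk (0+2) x \<longlongrightarrow> 2 * x * (- pi * chebT 1 x) + 2 * (pi / 2) - 0) (at_right 0)"
      by (rule Lim_transform_eventually[OF _ ev])
    moreover have "2 * x * (- pi * chebT 1 x) + 2 * (pi / 2) - 0 = - pi * chebT 2 x"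
    proof -
      have c2: "chebT 2 x = 2 * x * chebT 1 x - chebT 0 x" using chebT_rec[OF xb, of 0] by (simp add: numeral_2_eq_2)
      have c1: "chebT 1 x = x" "chebT 0 x = 1" using xb by (simp_all add: chebT_def)
      show ?thesis unfolding c2 c1 by (simp add: algebra_simps)
    qed
    ultimately show ?case using P1 by (simp add: numeral_2_eq_2)
  next
    case (Suc j)
    have "((\<lambda>e. 2 * x * Pk (Suc j+1) x e + 2 * Qi (Suc j+1) x e - Pk (Suc j) x e)
        \<longlongrightarrow> 2 * x * (- pi * chebT (j+2) x) + 2 * 0 - (- pi * chebT (j+1) x)) (at_right 0)"
      using Suc.IH Qi_lim2[OF x, of "Suc j + 1"] by (intro tendsto_intros) auto
    then have "(Pk (Suc j+2) x \<longlongrightarrow> 2 * x * (- pi * chebT (j+2) x) + 2 * 0 - (- pi * chebT (j+1) x)) (at_right 0)"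
      by (rule Lim_transform_eventually[OF _ ev])
    moreover have "2 * x * (- pi * chebT (j+2) x) + 2 * 0 - (- pi * chebT (j+1) x) = - pi * chebT (Suc j + 2) x"
    proof -
      have h: "chebT (Suc j + 2) x = 2 * x * chebT (j+2) x - chebT (j+1) x"
        using chebT_rec[OF xb, of "j+1"] by simp
      show ?thesis by (subst h) (simp add: algebra_simps)
    qed
    ultimately show ?case using Suc.IH by simp
  qed
  then show ?thesis using k by (metis Suc_eq_plus1 add.commute le_add_diff_inverse)
qed



definition T1 :: "nat \<Rightarrow> real \<Rightarrow> real" where
  "T1 k y = real k * sin (real k * arccos y) / sqrt (1 - y\<^sup>2)"

definition T2 :: "nat \<Rightarrow> real \<Rightarrow> real" where
  "T2 k y = real k * (y * sin (real k * arccos y) / sqrt (1 - y\<^sup>2) - real k * cos (real k * arccos y)) / (1 - y\<^sup>2)"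

lemma chebT_deriv:
  fixes y :: real
  assumes y: "\<bar>y\<bar> < 1"
  shows "(chebT k has_real_derivative T1 k y) (at y)"
proof -
  have y2: "-1 < y" "y < 1" using y by auto
  have t: "sqrt (1 - y\<^sup>2) > 0" using y by (simp add: abs_square_less_1)
  have d: "((\<lambda>y. cos (real k * arccos y)) has_real_derivative
      (- sin (real k * arccos y)) * (real k * inverse (- sqrt (1 - y\<^sup>2)))) (at y)"
    by (intro DERIV_chain2[OF DERIV_cos] DERIV_cmult DERIV_arccos y2)
  have "(- sin (real k * arccos y)) * (real k * inverse (- sqrt (1 - y\<^sup>2))) = T1 k y"
    unfolding T1_def using t by (simp add: field_simps)
  then show ?thesis using d unfolding chebT_def[abs_def] by simp
qed

lemma T1_deriv:
  fixes y :: real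
  assumes y: "\<bar>y\<bar> < 1"
  shows "(T1 k has_real_derivative T2 k y) (at y)"
proof -
  have y2: "-1 < y" "y < 1" using y by auto
  have s2: "y\<^sup>2 < 1" using y by (simp add: abs_square_less_1)
  define t where "t = sqrt (1 - y\<^sup>2)"
  have tpos: "t > 0" unfolding t_def using s2 by simp
  have tt: "t * t = 1 - y\<^sup>2" unfolding t_def using s2 by simp
  have dS: "((\<lambda>y. sin (real k * arccos y)) has_real_derivative
      cos (real k * arccos y) * (real k * inverse (- t))) (at y)"
    unfolding t_def by (intro DERIV_chain2[OF DERIV_sin] DERIV_cmult DERIV_arccos y2)
  have dt: "((\<lambda>y. sqrt (1 - y\<^sup>2)) has_real_derivative (- y / t)) (at y)"
  proof -
    have "((\<lambda>y. sqrt (1 - y\<^sup>2)) has_real_derivative (inverse (sqrt (1 - y\<^sup>2)) / 2 * (- (2 * y)))) (at y)"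
      using s2 by (intro DERIV_chain2[OF DERIV_real_sqrt]) (auto intro!: derivative_eq_intros)
    then show ?thesis unfolding t_def by (simp add: field_simps)
  qed
  have d: "((\<lambda>y. real k * (sin (real k * arccos y) / sqrt (1 - y\<^sup>2))) has_real_derivative
      real k * ((cos (real k * arccos y) * (real k * inverse (- t)) * sqrt (1 - y\<^sup>2) - sin (real k * arccos y) * (- y / t))
        / (sqrt (1 - y\<^sup>2) * sqrt (1 - y\<^sup>2)))) (at y)"
    using tpos unfolding t_def by (intro DERIV_cmult DERIV_divide dS[unfolded t_def] dt[unfolded t_def]) auto
  have "real k * ((cos (real k * arccos y) * (real k * inverse (- t)) * sqrt (1 - y\<^sup>2) - sin (real k * arccos y) * (- y / t))
        / (sqrt (1 - y\<^sup>2) * sqrt (1 - y\<^sup>2))) = T2 k y"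
  proof -
    have st: "sqrt (1 - y\<^sup>2) = t" unfolding t_def ..
    show ?thesis unfolding T2_def st tt[symmetric] using tpos by (simp add: field_simps)
  qed
  moreover have "T1 k = (\<lambda>y. real k * (sin (real k * arccos y) / sqrt (1 - y\<^sup>2)))"
    unfolding T1_def[abs_def] by simp
  ultimately show ?thesis using d by simp
qed

lemma T2_U:
  fixes r :: real
  assumes r: "\<bar>r\<bar> < 1" and k: "k \<ge> 2"
  shows "T2 k r = real k / 2 * ((real k + 1) * chebU (k - 2) r - (real k - 1) * chebU k r) / (1 - r\<^sup>2)"
proof -
  define A where "A = arccos r"
  define t where "t = sin A"
  have r2: "-1 \<le> r" "r \<le> 1" using r by auto
  have cA: "cos A = r" unfolding A_def using r2 by simp
  have tdef: "t = sqrt (1 - r\<^sup>2)" unfolding t_def A_def using r2 by (simp add: sin_arccos)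
  have tpos: "t > 0" unfolding tdef using r by (simp add: abs_square_less_1)
  have k2: "real (k - 2) + 1 = real k - 1" using k by (simp add: of_nat_diff)
  have U1: "chebU (k - 2) r = sin (real k * A - A) / t"
    unfolding chebU_def k2 A_def[symmetric] t_def by (simp add: algebra_simps)
  have U2: "chebU k r = sin (real k * A + A) / t"
    unfolding chebU_def A_def[symmetric] t_def by (simp add: algebra_simps)
  have "real k / 2 * ((real k + 1) * chebU (k - 2) r - (real k - 1) * chebU k r)
      = real k / 2 * ((real k + 1) * (sin (real k * A) * r - cos (real k * A) * t) - (real k - 1) * (sin (real k * A) * r + cos (real k * A) * t)) / t"
    unfolding U1 U2 sin_diff sin_add cA t_def[symmetric] using tpos by (simp add: field_simps)
  also have "\<dots> = real k * (r * sin (real k * A) / t - real k * cos (real k * A))"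
    using tpos by (simp add: field_simps)
  finally have eqX: "real k / 2 * ((real k + 1) * chebU (k - 2) r - (real k - 1) * chebU k r)
      = real k * (r * sin (real k * A) / t - real k * cos (real k * A))" .
  show ?thesis unfolding eqX unfolding T2_def A_def[symmetric] tdef[symmetric] by (rule refl)
qed



lemma ev_abs:
  fixes y :: real
  assumes "\<bar>y\<bar> < 1"
  shows "eventually (\<lambda>z. \<bar>z\<bar> < 1) (nhds y)"
proof -
  have "eventually (\<lambda>z. z \<in> {-1<..<1::real}) (nhds y)"
    by (rule eventually_nhds_in_open) (use assms in auto)
  then show ?thesis by (rule eventually_mono) (auto simp: abs_less_iff)
qed

lemma pieceI:
  fixes D :: "real \<Rightarrow> real" and c :: "nat \<Rightarrow> real" and kk :: "nat \<Rightarrow> nat"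
  assumes ab: "-1 \<le> a" "b \<le> 1" "x \<notin> {a..b}" and J: "finite J"
    and DS: "\<And>s. -1 \<le> s \<Longrightarrow> s \<le> 1 \<Longrightarrow> D s = K * (\<Sum>j\<in>J. c j * sin (real (kk j) * arccos s))"
  shows "integral {a..b} (\<lambda>s. D s / (s - x)) = K * (\<Sum>j\<in>J. c j * integral {a..b} (\<lambda>s. sin (real (kk j) * arccos s) / (s - x)))"
proof -
  have "integral {a..b} (\<lambda>s. D s / (s - x)) = integral {a..b} (\<lambda>s. K * (\<Sum>j\<in>J. c j * (sin (real (kk j) * arccos s) / (s - x))))"
  proof (rule integral_cong)
    fix s assume s: "s \<in> {a..b}"
    then have "D s = K * (\<Sum>j\<in>J. c j * sin (real (kk j) * arccos s))" using ab by (intro DS) auto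
    then show "D s / (s - x) = K * (\<Sum>j\<in>J. c j * (sin (real (kk j) * arccos s) / (s - x)))"
      by (simp add: sum_divide_distrib[symmetric])
  qed
  also have "\<dots> = K * integral {a..b} (\<lambda>s. \<Sum>j\<in>J. c j * (sin (real (kk j) * arccos s) / (s - x)))"
    by simp
  also have "integral {a..b} (\<lambda>s. \<Sum>j\<in>J. c j * (sin (real (kk j) * arccos s) / (s - x)))
      = (\<Sum>j\<in>J. integral {a..b} (\<lambda>s. c j * (sin (real (kk j) * arccos s) / (s - x))))"
    by (rule integral_sum[OF J]) (intro integrable_on_mult_right integrable_continuous_interval cont_sin_arccos_div ab)
  also have "\<dots> = (\<Sum>j\<in>J. c j * integral {a..b} (\<lambda>s. sin (real (kk j) * arccos s) / (s - x)))"
    by (intro sum.cong refl Henstock_Kurzweil_Integration.integral_mult_right)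
  finally show ?thesis .
qed

lemma alg_final:
  fixes K Cst p cj q X d :: real
  assumes "- (K / 4) = Cst" "d \<noteq> 0"
  shows "1 / 2 * (K * (cj * (- p * (q / 2 * X / d)))) = Cst * (p / d) * (cj * q * X)"
  unfolding assms(1)[symmetric] using assms(2) by (simp add: field_simps)

theorem mainTheorem5:
  fixes m n :: nat and r :: real
  assumes "m \<ge> 1" and "n \<ge> 2 * m + 2" and "\<bar>r\<bar> < 1"
  shows "hadamard_fp (\<lambda>s. chebT n s * (1 - s\<^sup>2) powr (real m - 1/2)) 3 r =
    (-1) ^ (m + 1) * (1/2) ^ (2 * m + 1) * (pi / (1 - r\<^sup>2)) *
    (\<Sum>j = 0..2 * m - 1. (-1) ^ j * real ((2 * m - 1) choose j) *
       (real n + 1 - 2 * real m + 2 * real j) *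
       ((real n + 2 - 2 * real m + 2 * real j) * chebU (n - 1 - 2 * m + 2 * j) r
        - (real n - 2 * real m + 2 * real j) * chebU (n + 1 - 2 * m + 2 * j) r))"
proof -
  note m = assms(1) and n = assms(2) and r = assms(3)
  define D where "D = (\<lambda>s. chebT n s * (1 - s\<^sup>2) powr (real m - 1/2))"
  define J where "J = {0..2*m-1}"
  define K where "K = (-1::real)^m / 2^(2*m-1)"
  define c where "c = (\<lambda>j. (-1::real)^j * real ((2*m-1) choose j))"
  define kk where "kk = (\<lambda>j. n + 1 - 2*m + 2*j)"
  define F where "F = (\<lambda>y. K * (\<Sum>j\<in>J. c j * (- pi * chebT (kk j) y)))"
  define F1 where "F1 = (\<lambda>y. K * (\<Sum>j\<in>J. c j * (- pi * T1 (kk j) y)))"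
  define F2 where "F2 = (\<lambda>y. K * (\<Sum>j\<in>J. c j * (- pi * T2 (kk j) y)))"
  have finJ: "finite J" unfolding J_def by simp
  have kk_ge: "kk j \<ge> 2" for j unfolding kk_def using n by simp
  have kk_real: "real (kk j) = real n - real (2*m-1) + 2 * real j" for j
    unfolding kk_def using m n by (simp add: of_nat_diff)
  have DS: "D s = K * (\<Sum>j\<in>J. c j * sin (real (kk j) * arccos s))" if "-1 \<le> s" "s \<le> 1" for s
    unfolding D_def D_expand[OF m that] K_def J_def c_def kk_real ..
  have cpvF: "cpv D x = F x" if x: "\<bar>x\<bar> < 1" for x
  proof -
    have PVeq: "PV D x e = K * (\<Sum>j\<in>J. c j * Pk (kk j) x e)" if e: "0 < e" "e < 1 - \<bar>x\<bar>" for e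
    proof -
      have l: "(-1::real) \<le> -1" "x - e \<le> 1" "x \<notin> {-1..x-e}" using x e by auto
      have rr: "-1 \<le> x + e" "(1::real) \<le> 1" "x \<notin> {x+e..1}" using x e by auto
      have A: "integral {-1..x-e} (\<lambda>s. D s / (s - x)) = K * (\<Sum>j\<in>J. c j * integral {-1..x-e} (\<lambda>s. sin (real (kk j) * arccos s) / (s - x)))"
        by (rule pieceI[OF l finJ DS])
      have B: "integral {x+e..1} (\<lambda>s. D s / (s - x)) = K * (\<Sum>j\<in>J. c j * integral {x+e..1} (\<lambda>s. sin (real (kk j) * arccos s) / (s - x)))"
        by (rule pieceI[OF rr finJ DS])
      show ?thesis
        unfolding PV_def A B by (simp add: sum.distrib distrib_left)
    qed
    have lim: "(PV D x \<longlongrightarrow> F x) (at_right 0)"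
    proof -
      have "((\<lambda>e. K * (\<Sum>j\<in>J. c j * Pk (kk j) x e)) \<longlongrightarrow> F x) (at_right 0)"
        unfolding F_def
        by (intro tendsto_mult tendsto_const tendsto_sum PVk_lim x) (use kk_ge in \<open>auto intro: order_trans[of _ 2]\<close>)
      moreover have "eventually (\<lambda>e. K * (\<Sum>j\<in>J. c j * Pk (kk j) x e) = PV D x e) (at_right 0)"
        by (rule eventually_small[of "1 - \<bar>x\<bar>"]) (use x PVeq in auto)
      ultimately show ?thesis by (rule Lim_transform_eventually)
    qed
    have "cpv D x = Lim (at_right 0) (PV D x)"
      unfolding cpv_def PV_def[abs_def] ..
    also have "\<dots> = F x" by (rule tendsto_Lim[OF trivial_limit_at_right_real lim])
    finally show ?thesis .
  qed
  have dF: "(F has_real_derivative F1 y) (at y)" if "\<bar>y\<bar> < 1" for y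
    unfolding F_def F1_def by (intro DERIV_cmult DERIV_sum chebT_deriv that)
  have dF1: "(F1 has_real_derivative F2 y) (at y)" if "\<bar>y\<bar> < 1" for y
    unfolding F1_def F2_def by (intro DERIV_cmult DERIV_sum T1_deriv that)
  have h2: "hadamard_fp D 2 y = F1 y" if y: "\<bar>y\<bar> < 1" for y
  proof -
    have hf1: "hadamard_fp D (Suc 0) = cpv D" by (rule ext) simp
    have "hadamard_fp D 2 y = deriv (cpv D) y" by (simp add: numeral_2_eq_2 hf1)
    also have "\<dots> = deriv F y"
      by (rule deriv_cong_ev[OF eventually_mono[OF ev_abs[OF y]] refl]) (use cpvF in auto)
    also have "\<dots> = F1 y" by (rule DERIV_imp_deriv[OF dF[OF y]])
    finally show ?thesis .
  qed
  have "hadamard_fp D 3 r = 1 / 2 * deriv (hadamard_fp D 2) r"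
    by (simp add: numeral_3_eq_3 numeral_2_eq_2)
  also have "deriv (hadamard_fp D 2) r = deriv F1 r"
    by (rule deriv_cong_ev[OF eventually_mono[OF ev_abs[OF r]] refl]) (use h2 in auto)
  also have "\<dots> = F2 r" by (rule DERIV_imp_deriv[OF dF1[OF r]])
  finally have H: "hadamard_fp D 3 r = 1 / 2 * F2 r" .
  have d: "1 - r\<^sup>2 \<noteq> 0"
  proof -
    have "r\<^sup>2 < 1" using r by (simp add: abs_square_less_1)
    then show ?thesis by simp
  qed
  have Kc: "- (K / 4) = (-1) ^ (m + 1) * (1/2::real) ^ (2 * m + 1)"
  proof -
    have e: "2 * m + 1 = (2*m-1) + 2" using m by simp
    have "(1/2::real) ^ (2 * m + 1) = (1/2)^(2*m-1) * (1/4)" unfolding e power_add by (simp add: power2_eq_square)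
    then show ?thesis unfolding K_def by (simp add: power_one_over field_simps)
  qed
  have "1 / 2 * F2 r = (\<Sum>j\<in>J. 1 / 2 * (K * (c j * (- pi * T2 (kk j) r))))"
    unfolding F2_def sum_distrib_left ..
  also have "\<dots> = (\<Sum>j\<in>J. (-1) ^ (m + 1) * (1/2) ^ (2 * m + 1) * (pi / (1 - r\<^sup>2)) *
       ((-1) ^ j * real ((2 * m - 1) choose j) *
       (real n + 1 - 2 * real m + 2 * real j) *
       ((real n + 2 - 2 * real m + 2 * real j) * chebU (n - 1 - 2 * m + 2 * j) r
        - (real n - 2 * real m + 2 * real j) * chebU (n + 1 - 2 * m + 2 * j) r)))"
  proof (rule sum.cong[OF refl])
    fix j assume "j \<in> J"
    have q: "real (kk j) = real n + 1 - 2 * real m + 2 * real j" unfolding kk_def using m n by (simp add: of_nat_diff)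
    have q1: "real (kk j) + 1 = real n + 2 - 2 * real m + 2 * real j" using q by simp
    have q2: "real (kk j) - 1 = real n - 2 * real m + 2 * real j" using q by simp
    have i1: "kk j - 2 = n - 1 - 2 * m + 2 * j" unfolding kk_def using m n by simp
    have i2: "kk j = n + 1 - 2 * m + 2 * j" unfolding kk_def ..
    have T: "T2 (kk j) r = real (kk j) / 2 * ((real n + 2 - 2 * real m + 2 * real j) * chebU (n - 1 - 2 * m + 2 * j) r
        - (real n - 2 * real m + 2 * real j) * chebU (n + 1 - 2 * m + 2 * j) r) / (1 - r\<^sup>2)"
      using T2_U[OF r kk_ge[of j]] unfolding q1 q2 i1 by (simp only: i2)
    show "1 / 2 * (K * (c j * (- pi * T2 (kk j) r))) = (-1) ^ (m + 1) * (1/2) ^ (2 * m + 1) * (pi / (1 - r\<^sup>2)) *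
       ((-1) ^ j * real ((2 * m - 1) choose j) *
       (real n + 1 - 2 * real m + 2 * real j) *
       ((real n + 2 - 2 * real m + 2 * real j) * chebU (n - 1 - 2 * m + 2 * j) r
        - (real n - 2 * real m + 2 * real j) * chebU (n + 1 - 2 * m + 2 * j) r))"
      unfolding T c_def q[symmetric] by (rule alg_final[OF Kc d])
  qed
  also have "\<dots> = (-1) ^ (m + 1) * (1/2) ^ (2 * m + 1) * (pi / (1 - r\<^sup>2)) *
    (\<Sum>j = 0..2 * m - 1. (-1) ^ j * real ((2 * m - 1) choose j) *
       (real n + 1 - 2 * real m + 2 * real j) *
       ((real n + 2 - 2 * real m + 2 * real j) * chebU (n - 1 - 2 * m + 2 * j) r
        - (real n - 2 * real m + 2 * real j) * chebU (n + 1 - 2 * m + 2 * j) r))"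
    unfolding J_def sum_distrib_left ..
  finally show ?thesis using H unfolding D_def by simp
qed


end
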